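(* Let $(\Omega,\{\Omega_m\}_{m\ge1},\rho,\mu)$ be a locally homogeneous space and fix $n\ge1$. Let $\Delta_{n+1}=\{Q^k_\alpha\}$ be the family of dyadic cubes subordinated to $\Omega_{n+1}$, with constants $a_0,c_0,c_1,c_2,\delta$, as described in the context. Then for every positive integer $k$ large enough, the set $\Omega_n$ is covered, up to a set of $\mu$-measure zero, by a finite union of dyadic cubes $Q^k_\alpha\in\Delta_{n+1}$ of generation $k$ with the following properties: (i) $Q^k_\alpha\subset B(z^k_\alpha,c_1\delta^k)\subset\Omega_{n+1}$; (ii) there is a set $F^k_\alpha$ which is a finite union of dyadic cubes $Q^k_{\beta}\in\Delta_{n+1}$ of generation $k$, such that $B(z^k_\alpha,c_1\delta^k)\subset F^k_\alpha$ up to a set of measure zero and $F^k_\alpha\subset B(z^k_\alpha,c'\delta^k)\subset\Omega_{n+1}$ (for a constant $c'$ independent of $k$); moreover $F^k_\alpha$ is a space of homogeneous type, i.e. there is a constant $c$ with $\mu(B(x,2r)\cap F^k_\alpha)\le c\,\mu(B(x,r)\cap F^k_\alpha)$ for a.e. $x\in F^k_\alpha$ and all $r>0$.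
   Context: A locally homogeneous space $(\Omega,\{\Omega_m\},\rho,\mu)$ consists of: a set $\Omega$ and $\rho:\Omega\times\Omega\to[0,\infty)$ with $\rho(x,y)=0\iff x=y$ and $\rho(x,y)=\rho(y,x)$; balls $B(x,r)=\{y\in\Omega:\rho(x,y)<r\}$; the topology in which $A$ is open iff every $x\in A$ has some $B(x,r)\subset A$; a set is bounded if contained in some ball; it is assumed that the balls are open and the closure of $B(x,r)$ is contained in $\{y:\rho(x,y)\le r\}$ (equivalently, $\rho(\cdot,y)$ is continuous for each $y$); $\mu$ is a positive regular Borel measure on $\Omega$; $\{\Omega_m\}_{m\ge1}$ is an increasing sequence of bounded measurable sets with $\bigcup_m\Omega_m=\Omega$ such that for every $m$: the closure of $\Omega_m$ is compact; there is $\varepsilon_m>0$ with $\{x\in\Omega:\rho(x,y)<2\varepsilon_m\text{ for some }y\in\Omega_m\}\subset\Omega_{m+1}$; there is $B_m\ge1$ with $\rho(x,y)\le B_m(\rho(x,z)+\rho(z,y))$ for all $x,y,z\in\Omega_m$; there is $C_m>1$ with $0<\mu(B(x,2r))\le C_m\mu(B(x,r))<\infty$ for all $x\in\Omega_m$, $0<r\le\varepsilon_m$. Dyadic cubes (construction of Bramanti–Zhu): for each $N$ there is a collection $\Delta_N=\{Q^k_\alpha:k=1,2,\dots,\alpha\in I_k\}$ of open sets ("dyadic cubes subordinated to $\Omega_N$", $Q^k_\alpha$ of generation $k$), constants $a_0,c_0,c_1,c_2>0$, $\delta\in(0,1)$ with $c_1\delta<2\varepsilon_{N+1}$, and a set $E\subset\Omega_N$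 with $\mu(E)=0$, such that for every $k\ge1$: (a) each $Q^k_\alpha$ contains a ball $B(z^k_\alpha,a_0\delta^k)$; (b) $\bigcup_\alpha Q^k_\alpha\subset\Omega_{N+1}$; (c) for $1\le l\le k$ there is $Q^l_\beta\supseteq Q^k_\alpha$; (d) $\mathrm{diam}(Q^k_\alpha)<c_1\delta^k$ and $\overline{Q^k_\alpha}\subset B(z^k_\alpha,c_1\delta^k)\subset\Omega_{N+2}$; (e) if $l\ge k$ then either $Q^l_\beta\subset Q^k_\alpha$ or $Q^l_\beta\cap Q^k_\alpha=\emptyset$; (f) $\Omega_N\setminus\bigcup_\alpha Q^k_\alpha\subset E$; (g) for $x\in Q^k_\alpha\setminus E$ and $j\ge1$ there is $Q^j_\beta\ni x$; (h) $\mu(B(x,2r)\cap Q^k_\alpha)\le c_2\,\mu(B(x,r)\cap Q^k_\alpha)$ for $x\in Q^k_\alpha\setminus E$, $r>0$; more precisely $\mu(B(x,r)\cap Q^k_\alpha)\ge c_0\mu(B(x,r))$ for $r\le\delta^k$ and $\ge c_0\mu(Q^k_\alpha)$ for $r>\delta^k$. *)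

theory Defs
  imports "HOL-Analysis.Analysis"
begin

definition qball :: "'a set \<Rightarrow> ('a \<Rightarrow> 'a \<Rightarrow> real) \<Rightarrow> 'a \<Rightarrow> real \<Rightarrow> 'a set" where
  "qball \<Omega> \<rho> x r = {y \<in> \<Omega>. \<rho> x y < r}"

definition qtop :: "'a set \<Rightarrow> ('a \<Rightarrow> 'a \<Rightarrow> real) \<Rightarrow> 'a topology" where
  "qtop \<Omega> \<rho> = topology (\<lambda>A. A \<subseteq> \<Omega> \<and> (\<forall>x\<in>A. \<exists>r>0. qball \<Omega> \<rho> x r \<subseteq> A))"

definition qbounded :: "'a set \<Rightarrow> ('a \<Rightarrow> 'a \<Rightarrow> real) \<Rightarrow> 'a set \<Rightarrow> bool" where
  "qbounded \<Omega> \<rho> S \<longleftrightarrow> (\<exists>x\<in>\<Omega>. \<exists>r. S \<subseteq> qball \<Omega> \<rho> x r)"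

definition regular_borel :: "'a topology \<Rightarrow> 'a measure \<Rightarrow> bool" where
  "regular_borel T \<mu> \<longleftrightarrow>
     space \<mu> = topspace T \<and>
     sets \<mu> = sigma_sets (topspace T) {U. openin T U} \<and>
     (\<forall>A\<in>sets \<mu>. emeasure \<mu> A = (INF U\<in>{U. openin T U \<and> A \<subseteq> U}. emeasure \<mu> U)) \<and>
     (\<forall>U. openin T U \<longrightarrow> emeasure \<mu> U = (SUP K\<in>{K. compactin T K \<and> K \<subseteq> U}. emeasure \<mu> K))"

text \<open>Locally homogeneous space (Omega, {Omega_m}_{m>=1}, rho, mu); the constants
  epsilon_m, B_m, C_m are made explicit as the functions eps, Bq, Cd.
  The index m ranges over m >= 1 (Om 0 is irrelevant).\<close>
definition loc_hom_space ::
  "'a set \<Rightarrow> (nat \<Rightarrow> 'a set) \<Rightarrow> ('a \<Rightarrow> 'a \<Rightarrow> real) \<Rightarrow> 'a measure \<Rightarrow>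
   (nat \<Rightarrow> real) \<Rightarrow> (nat \<Rightarrow> real) \<Rightarrow> (nat \<Rightarrow> real) \<Rightarrow> bool" where
  "loc_hom_space \<Omega> Om \<rho> \<mu> eps Bq Cd \<longleftrightarrow>
     (\<forall>x\<in>\<Omega>. \<forall>y\<in>\<Omega>. \<rho> x y \<ge> 0 \<and> (\<rho> x y = 0 \<longleftrightarrow> x = y) \<and> \<rho> x y = \<rho> y x) \<and>
     (\<forall>x\<in>\<Omega>. \<forall>r. openin (qtop \<Omega> \<rho>) (qball \<Omega> \<rho> x r)) \<and>
     (\<forall>x\<in>\<Omega>. \<forall>r. qtop \<Omega> \<rho> closure_of (qball \<Omega> \<rho> x r) \<subseteq> {y\<in>\<Omega>. \<rho> x y \<le> r}) \<and>
     regular_borel (qtop \<Omega> \<rho>) \<mu> \<and>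
     (\<forall>m\<ge>1. Om m \<subseteq> Om (Suc m)) \<and>
     (\<Union>m\<in>{1..}. Om m) = \<Omega> \<and>
     (\<forall>m\<ge>1.
        Om m \<in> sets \<mu> \<and>
        qbounded \<Omega> \<rho> (Om m) \<and>
        compactin (qtop \<Omega> \<rho>) (qtop \<Omega> \<rho> closure_of (Om m)) \<and>
        eps m > 0 \<and>
        {x\<in>\<Omega>. \<exists>y\<in>Om m. \<rho> x y < 2 * eps m} \<subseteq> Om (Suc m) \<and>
        Bq m \<ge> 1 \<and>
        (\<forall>x\<in>Om m. \<forall>y\<in>Om m. \<forall>z\<in>Om m. \<rho> x y \<le> Bq m * (\<rho> x z + \<rho> z y)) \<and>
        Cd m > 1 \<and>
        (\<forall>x\<in>Om m. \<forall>r. 0 < r \<and> r \<le> eps m \<longrightarrow>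
            0 < emeasure \<mu> (qball \<Omega> \<rho> x (2 * r)) \<and>
            emeasure \<mu> (qball \<Omega> \<rho> x (2 * r)) \<le> ennreal (Cd m) * emeasure \<mu> (qball \<Omega> \<rho> x r) \<and>
            emeasure \<mu> (qball \<Omega> \<rho> x r) < \<infinity>))"

text \<open>The family Delta_N = {Q k alpha : k >= 1, alpha in I k} of dyadic cubes
  subordinated to Omega_N (Bramanti--Zhu), with centres z k alpha, constants
  a0, c0, c1, c2, delta and exceptional null set E, satisfying (a)--(h).\<close>
definition dyadic_cubes ::
  "'a set \<Rightarrow> (nat \<Rightarrow> 'a set) \<Rightarrow> ('a \<Rightarrow> 'a \<Rightarrow> real) \<Rightarrow> 'a measure \<Rightarrow> (nat \<Rightarrow> real) \<Rightarrow> nat \<Rightarrow>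
   (nat \<Rightarrow> 'i set) \<Rightarrow> (nat \<Rightarrow> 'i \<Rightarrow> 'a set) \<Rightarrow> (nat \<Rightarrow> 'i \<Rightarrow> 'a) \<Rightarrow>
   real \<Rightarrow> real \<Rightarrow> real \<Rightarrow> real \<Rightarrow> real \<Rightarrow> 'a set \<Rightarrow> bool" where
  "dyadic_cubes \<Omega> Om \<rho> \<mu> eps N I Q z a0 c0 c1 c2 \<delta> E \<longleftrightarrow>
     a0 > 0 \<and> c0 > 0 \<and> c1 > 0 \<and> c2 > 0 \<and> 0 < \<delta> \<and> \<delta> < 1 \<and> c1 * \<delta> < 2 * eps (Suc N) \<and>
     E \<subseteq> Om N \<and> E \<in> null_sets \<mu> \<and>
     (\<forall>k\<ge>1. \<forall>\<alpha>\<in>I k.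
        z k \<alpha> \<in> \<Omega> \<and>
        openin (qtop \<Omega> \<rho>) (Q k \<alpha>) \<and>
        \<comment> \<open>(a)\<close>
        qball \<Omega> \<rho> (z k \<alpha>) (a0 * \<delta> ^ k) \<subseteq> Q k \<alpha> \<and>
        \<comment> \<open>(b)\<close>
        Q k \<alpha> \<subseteq> Om (Suc N) \<and>
        \<comment> \<open>(c)\<close>
        (\<forall>l. 1 \<le> l \<and> l \<le> k \<longrightarrow> (\<exists>\<beta>\<in>I l. Q k \<alpha> \<subseteq> Q l \<beta>)) \<and>
        \<comment> \<open>(d): diam (Q k alpha) < c1 delta^k, closure inside the ball, ball inside Omega_(N+2)\<close>
        (\<exists>d < c1 * \<delta> ^ k. \<forall>x\<in>Q k \<alpha>. \<forall>y\<in>Q k \<alpha>. \<rho> x y \<le> d) \<and>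
        qtop \<Omega> \<rho> closure_of (Q k \<alpha>) \<subseteq> qball \<Omega> \<rho> (z k \<alpha>) (c1 * \<delta> ^ k) \<and>
        qball \<Omega> \<rho> (z k \<alpha>) (c1 * \<delta> ^ k) \<subseteq> Om (N + 2) \<and>
        \<comment> \<open>(e)\<close>
        (\<forall>l\<ge>k. \<forall>\<beta>\<in>I l. Q l \<beta> \<subseteq> Q k \<alpha> \<or> Q l \<beta> \<inter> Q k \<alpha> = {}) \<and>
        \<comment> \<open>(g)\<close>
        (\<forall>x\<in>Q k \<alpha> - E. \<forall>j\<ge>1. \<exists>\<beta>\<in>I j. x \<in> Q j \<beta>) \<and>
        \<comment> \<open>(h)\<close>
        (\<forall>x\<in>Q k \<alpha> - E. \<forall>r>0.
           emeasure \<mu> (qball \<Omega> \<rho> x (2 * r) \<inter> Q k \<alpha>)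
             \<le> ennreal c2 * emeasure \<mu> (qball \<Omega> \<rho> x r \<inter> Q k \<alpha>) \<and>
           (r \<le> \<delta> ^ k \<longrightarrow> emeasure \<mu> (qball \<Omega> \<rho> x r \<inter> Q k \<alpha>)
                             \<ge> ennreal c0 * emeasure \<mu> (qball \<Omega> \<rho> x r)) \<and>
           (r > \<delta> ^ k \<longrightarrow> emeasure \<mu> (qball \<Omega> \<rho> x r \<inter> Q k \<alpha>)
                             \<ge> ennreal c0 * emeasure \<mu> (Q k \<alpha>)))) \<and>
     \<comment> \<open>(f)\<close>
     (\<forall>k\<ge>1. Om N - (\<Union>\<alpha>\<in>I k. Q k \<alpha>) \<subseteq> E)"

end

theory Submission
  imports Defs
begin

lemma qball_mono: "r \<le> s \<Longrightarrow> qball \<Omega> \<rho> x r \<subseteq> qball \<Omega> \<rho> x s"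
  unfolding qball_def by auto

lemma qtop_istop: "istopology (\<lambda>A. A \<subseteq> \<Omega> \<and> (\<forall>x\<in>A. \<exists>r>0. qball \<Omega> \<rho> x r \<subseteq> A))"
  unfolding istopology_def
proof (rule conjI; intro allI impI)
  fix S T assume S: "S \<subseteq> \<Omega> \<and> (\<forall>x\<in>S. \<exists>r>0. qball \<Omega> \<rho> x r \<subseteq> S)"
    and T: "T \<subseteq> \<Omega> \<and> (\<forall>x\<in>T. \<exists>r>0. qball \<Omega> \<rho> x r \<subseteq> T)"
  show "S \<inter> T \<subseteq> \<Omega> \<and> (\<forall>x\<in>S \<inter> T. \<exists>r>0. qball \<Omega> \<rho> x r \<subseteq> S \<inter> T)"
  proof (intro conjI ballI)
    show "S \<inter> T \<subseteq> \<Omega>" using S by auto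
    fix x assume x: "x \<in> S \<inter> T"
    then obtain r1 r2 where "r1 > 0" "qball \<Omega> \<rho> x r1 \<subseteq> S" "r2 > 0" "qball \<Omega> \<rho> x r2 \<subseteq> T"
      using S T by blast
    moreover have "qball \<Omega> \<rho> x (min r1 r2) \<subseteq> qball \<Omega> \<rho> x r1" "qball \<Omega> \<rho> x (min r1 r2) \<subseteq> qball \<Omega> \<rho> x r2"
      by (simp_all add: qball_mono)
    ultimately show "\<exists>r>0. qball \<Omega> \<rho> x r \<subseteq> S \<inter> T"
      by (intro exI[of _ "min r1 r2"]) auto
  qed
next
  fix K :: "'a set set" assume "\<forall>K\<in>K. K \<subseteq> \<Omega> \<and> (\<forall>x\<in>K. \<exists>r>0. qball \<Omega> \<rho> x r \<subseteq> K)"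
  then show "\<Union>K \<subseteq> \<Omega> \<and> (\<forall>x\<in>\<Union>K. \<exists>r>0. qball \<Omega> \<rho> x r \<subseteq> \<Union>K)"
    by (meson Union_least Union_upper UnionE order_trans)
qed

lemma qtop_openin: "openin (qtop \<Omega> \<rho>) A \<longleftrightarrow> A \<subseteq> \<Omega> \<and> (\<forall>x\<in>A. \<exists>r>0. qball \<Omega> \<rho> x r \<subseteq> A)"
  unfolding qtop_def topology_inverse'[OF qtop_istop] by (rule refl)

lemma qtop_topspace: "topspace (qtop \<Omega> \<rho>) = \<Omega>"
proof -
  have "openin (qtop \<Omega> \<rho>) \<Omega>" unfolding qtop_openin
    by (auto intro!: exI[of _ 1] simp: qball_def)
  then have "\<Omega> \<subseteq> topspace (qtop \<Omega> \<rho>)" by (simp add: openin_subset)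
  moreover have "topspace (qtop \<Omega> \<rho>) \<subseteq> \<Omega>"
    unfolding topspace_def qtop_openin by auto
  ultimately show ?thesis by blast
qed


lemma Om_mono:
  assumes "\<forall>m\<ge>1. Om m \<subseteq> Om (Suc m)" "1 \<le> m" "m \<le> m'"
  shows "Om m \<subseteq> (Om m' :: 'a set)"
  using assms(3)
proof (induction m' rule: dec_induct)
  case base then show ?case by simp
next
  case (step j)
  have "Om j \<subseteq> Om (Suc j)" using assms(1,2) step(1) by simp
  then show ?case using step(3) by blast
qed

theorem mainTheorem4:
  fixes \<Omega> :: "'a set" and Om :: "nat \<Rightarrow> 'a set" and \<rho> :: "'a \<Rightarrow> 'a \<Rightarrow> real"
    and \<mu> :: "'a measure" and eps Bq Cd :: "nat \<Rightarrow> real" and n :: nat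
    and I :: "nat \<Rightarrow> 'i set" and Q :: "nat \<Rightarrow> 'i \<Rightarrow> 'a set" and z :: "nat \<Rightarrow> 'i \<Rightarrow> 'a"
    and a0 c0 c1 c2 \<delta> :: real and E :: "'a set"
  assumes "loc_hom_space \<Omega> Om \<rho> \<mu> eps Bq Cd"
    and "n \<ge> 1"
    and "dyadic_cubes \<Omega> Om \<rho> \<mu> eps (Suc n) I Q z a0 c0 c1 c2 \<delta> E"
  shows "\<exists>c'. \<exists>K. \<forall>k\<ge>K. k \<ge> 1 \<longrightarrow>
           (\<exists>A\<subseteq>I k. finite A \<and>
              Om n - (\<Union>\<alpha>\<in>A. Q k \<alpha>) \<in> null_sets \<mu> \<and>
              (\<forall>\<alpha>\<in>A.
                 Q k \<alpha> \<subseteq> qball \<Omega> \<rho> (z k \<alpha>) (c1 * \<delta> ^ k) \<and>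
                 qball \<Omega> \<rho> (z k \<alpha>) (c1 * \<delta> ^ k) \<subseteq> Om (Suc n) \<and>
                 (\<exists>B\<subseteq>I k. finite B \<and>
                    qball \<Omega> \<rho> (z k \<alpha>) (c1 * \<delta> ^ k) - (\<Union>\<beta>\<in>B. Q k \<beta>) \<in> null_sets \<mu> \<and>
                    (\<Union>\<beta>\<in>B. Q k \<beta>) \<subseteq> qball \<Omega> \<rho> (z k \<alpha>) (c' * \<delta> ^ k) \<and>
                    qball \<Omega> \<rho> (z k \<alpha>) (c' * \<delta> ^ k) \<subseteq> Om (Suc n) \<and>
                    (\<exists>c::real. AE x in \<mu>. x \<in> (\<Union>\<beta>\<in>B. Q k \<beta>) \<longrightarrow>
                       (\<forall>r>0. emeasure \<mu> (qball \<Omega> \<rho> x (2 * r) \<inter> (\<Union>\<beta>\<in>B. Q k \<beta>))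
                               \<le> ennreal c * emeasure \<mu> (qball \<Omega> \<rho> x r \<inter> (\<Union>\<beta>\<in>B. Q k \<beta>)))))))"
proof -
  let ?T = "qtop \<Omega> \<rho>"
  let ?B = "qball \<Omega> \<rho>"
  note L = assms(1)[unfolded loc_hom_space_def]
  note D = assms(3)[unfolded dyadic_cubes_def]
  have rho: "\<forall>x\<in>\<Omega>. \<forall>y\<in>\<Omega>. \<rho> x y \<ge> 0 \<and> (\<rho> x y = 0 \<longleftrightarrow> x = y) \<and> \<rho> x y = \<rho> y x"
    by (rule L[THEN conjunct1])
  have bopen: "\<And>x r. x \<in> \<Omega> \<Longrightarrow> openin ?T (?B x r)"
    by (rule L[THEN conjunct2, THEN conjunct1, rule_format])
  have reg: "regular_borel ?T \<mu>"
    by (rule L[THEN conjunct2, THEN conjunct2, THEN conjunct2, THEN conjunct1])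
  have sets_eq: "sets \<mu> = sigma_sets \<Omega> {U. openin ?T U}" and space_eq: "space \<mu> = \<Omega>"
    using reg unfolding regular_borel_def qtop_topspace by blast+
  have opensets: "\<And>U. openin ?T U \<Longrightarrow> U \<in> sets \<mu>"
    unfolding sets_eq by (auto intro: sigma_sets.Basic)
  have bsets: "\<And>x r. x \<in> \<Omega> \<Longrightarrow> ?B x r \<in> sets \<mu>" using bopen opensets by blast
  have mono1: "\<forall>m\<ge>1. Om m \<subseteq> Om (Suc m)"
    by (rule L[THEN conjunct2, THEN conjunct2, THEN conjunct2, THEN conjunct2, THEN conjunct1])
  have OmO: "\<And>m. m \<ge> 1 \<Longrightarrow> Om m \<subseteq> \<Omega>"
  proof -
    fix m :: nat assume "m \<ge> 1"
    moreover have "(\<Union>m\<in>{1..}. Om m) = \<Omega>"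
      by (rule L[THEN conjunct2, THEN conjunct2, THEN conjunct2, THEN conjunct2, THEN conjunct2, THEN conjunct1])
    ultimately show "Om m \<subseteq> \<Omega>" by auto
  qed
  have mono: "\<And>m m'. 1 \<le> m \<Longrightarrow> m \<le> m' \<Longrightarrow> Om m \<subseteq> Om m'"
    using Om_mono[OF mono1] by blast
  have per: "\<forall>m\<ge>1.
        Om m \<in> sets \<mu> \<and>
        qbounded \<Omega> \<rho> (Om m) \<and>
        compactin (qtop \<Omega> \<rho>) (qtop \<Omega> \<rho> closure_of (Om m)) \<and>
        eps m > 0 \<and>
        {x\<in>\<Omega>. \<exists>y\<in>Om m. \<rho> x y < 2 * eps m} \<subseteq> Om (Suc m) \<and>
        Bq m \<ge> 1 \<and>
        (\<forall>x\<in>Om m. \<forall>y\<in>Om m. \<forall>z\<in>Om m. \<rho> x y \<le> Bq m * (\<rho> x z + \<rho> z y)) \<and>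
        Cd m > 1 \<and>
        (\<forall>x\<in>Om m. \<forall>r. 0 < r \<and> r \<le> eps m \<longrightarrow>
            0 < emeasure \<mu> (qball \<Omega> \<rho> x (2 * r)) \<and>
            emeasure \<mu> (qball \<Omega> \<rho> x (2 * r)) \<le> ennreal (Cd m) * emeasure \<mu> (qball \<Omega> \<rho> x r) \<and>
            emeasure \<mu> (qball \<Omega> \<rho> x r) < \<infinity>)"
    by (rule L[THEN conjunct2, THEN conjunct2, THEN conjunct2, THEN conjunct2, THEN conjunct2, THEN conjunct2])
  have Omsets: "\<And>m. m\<ge>1 \<Longrightarrow> Om m \<in> sets \<mu>" by (rule per[rule_format, THEN conjunct1])
  have cpt: "\<And>m. m\<ge>1 \<Longrightarrow> compactin ?T (?T closure_of (Om m))" by (rule per[rule_format, THEN conjunct2, THEN conjunct2, THEN conjunct1])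
  have epos: "\<And>m. m\<ge>1 \<Longrightarrow> eps m > 0" by (rule per[rule_format, THEN conjunct2, THEN conjunct2, THEN conjunct2, THEN conjunct1])
  have nb0: "\<And>m. m\<ge>1 \<Longrightarrow> {x\<in>\<Omega>. \<exists>y\<in>Om m. \<rho> x y < 2 * eps m} \<subseteq> Om (Suc m)" by (rule per[rule_format, THEN conjunct2, THEN conjunct2, THEN conjunct2, THEN conjunct2, THEN conjunct1])
  have Bq1: "\<And>m. m\<ge>1 \<Longrightarrow> Bq m \<ge> 1" by (rule per[rule_format, THEN conjunct2, THEN conjunct2, THEN conjunct2, THEN conjunct2, THEN conjunct2, THEN conjunct1])
  have qt: "\<And>m x y w. m\<ge>1 \<Longrightarrow> x\<in>Om m \<Longrightarrow> y\<in>Om m \<Longrightarrow> w\<in>Om m \<Longrightarrow> \<rho> x y \<le> Bq m * (\<rho> x w + \<rho> w y)"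
    using per[rule_format, THEN conjunct2, THEN conjunct2, THEN conjunct2, THEN conjunct2, THEN conjunct2, THEN conjunct2, THEN conjunct1] by blast
  have dbl: "\<And>m x r. m\<ge>1 \<Longrightarrow> x\<in>Om m \<Longrightarrow> 0 < r \<Longrightarrow> r \<le> eps m \<Longrightarrow>
            0 < emeasure \<mu> (?B x (2 * r)) \<and>
            emeasure \<mu> (?B x (2 * r)) \<le> ennreal (Cd m) * emeasure \<mu> (?B x r) \<and>
            emeasure \<mu> (?B x r) < \<infinity>"
    using per[rule_format, THEN conjunct2, THEN conjunct2, THEN conjunct2, THEN conjunct2, THEN conjunct2, THEN conjunct2, THEN conjunct2, THEN conjunct2] by blast
  have Cd1: "Cd (Suc (Suc n)) > 1" by (rule per[rule_format, THEN conjunct2, THEN conjunct2, THEN conjunct2, THEN conjunct2, THEN conjunct2, THEN conjunct2, THEN conjunct2, THEN conjunct1]) simp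
  have nb: "\<And>m z r. m\<ge>1 \<Longrightarrow> z \<in> Om m \<Longrightarrow> r \<le> 2 * eps m \<Longrightarrow> ?B z r \<subseteq> Om (Suc m)"
  proof
    fix m z r y assume m: "m\<ge>1" and z: "z \<in> Om m" and r: "r \<le> 2 * eps m" and y: "y \<in> ?B z r"
    have "z \<in> \<Omega>" using z OmO m by blast
    moreover have "y \<in> \<Omega>" "\<rho> z y < r" using y unfolding qball_def by auto
    ultimately have "y \<in> \<Omega>" "\<rho> y z < 2 * eps m" using rho r by auto
    then show "y \<in> Om (Suc m)" using nb0[OF m] z by blast
  qed
  have cst1: "a0 > 0" by (rule D[THEN conjunct1])
  have cst2: "c0 > 0" by (rule D[THEN conjunct2, THEN conjunct1])
  have cst3: "c1 > 0" by (rule D[THEN conjunct2, THEN conjunct2, THEN conjunct1])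
  have cst4: "c2 > 0" by (rule D[THEN conjunct2, THEN conjunct2, THEN conjunct2, THEN conjunct1])
  have cst5: "0 < \<delta>" by (rule D[THEN conjunct2, THEN conjunct2, THEN conjunct2, THEN conjunct2, THEN conjunct1])
  have cst6: "\<delta> < 1" by (rule D[THEN conjunct2, THEN conjunct2, THEN conjunct2, THEN conjunct2, THEN conjunct2, THEN conjunct1])
  note cst = cst1 cst2 cst3 cst4 cst5 cst6
  note CF = D[THEN conjunct2, THEN conjunct2, THEN conjunct2, THEN conjunct2, THEN conjunct2, THEN conjunct2, THEN conjunct2, THEN conjunct2, THEN conjunct2, THEN conjunct1]
  have Enull: "E \<in> null_sets \<mu>" by (rule D[THEN conjunct2, THEN conjunct2, THEN conjunct2, THEN conjunct2, THEN conjunct2, THEN conjunct2, THEN conjunct2, THEN conjunct2, THEN conjunct1])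
  have cover: "\<And>k. k\<ge>1 \<Longrightarrow> Om (Suc n) - (\<Union>\<alpha>\<in>I k. Q k \<alpha>) \<subseteq> E"
    using D[THEN conjunct2, THEN conjunct2, THEN conjunct2, THEN conjunct2, THEN conjunct2, THEN conjunct2, THEN conjunct2, THEN conjunct2, THEN conjunct2, THEN conjunct2] by blast
  have zO: "\<And>k \<alpha>. k\<ge>1 \<Longrightarrow> \<alpha>\<in>I k \<Longrightarrow> z k \<alpha> \<in> \<Omega>"
    by (rule CF[rule_format, THEN conjunct1])
  have Qopen: "\<And>k \<alpha>. k\<ge>1 \<Longrightarrow> \<alpha>\<in>I k \<Longrightarrow> openin ?T (Q k \<alpha>)"
    by (rule CF[rule_format, THEN conjunct2, THEN conjunct1])
  have Qball: "\<And>k \<alpha>. k\<ge>1 \<Longrightarrow> \<alpha>\<in>I k \<Longrightarrow> ?B (z k \<alpha>) (a0 * \<delta> ^ k) \<subseteq> Q k \<alpha>"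
    by (rule CF[rule_format, THEN conjunct2, THEN conjunct2, THEN conjunct1])
  have QOm: "\<And>k \<alpha>. k\<ge>1 \<Longrightarrow> \<alpha>\<in>I k \<Longrightarrow> Q k \<alpha> \<subseteq> Om (Suc (Suc n))"
    by (rule CF[rule_format, THEN conjunct2, THEN conjunct2, THEN conjunct2, THEN conjunct1])
  have Qdiam: "\<And>k \<alpha>. k\<ge>1 \<Longrightarrow> \<alpha>\<in>I k \<Longrightarrow> \<exists>d < c1 * \<delta> ^ k. \<forall>x\<in>Q k \<alpha>. \<forall>y\<in>Q k \<alpha>. \<rho> x y \<le> d"
    by (rule CF[rule_format, THEN conjunct2, THEN conjunct2, THEN conjunct2, THEN conjunct2, THEN conjunct2, THEN conjunct1])
  have Qnest: "\<And>k \<alpha> l \<beta>. k\<ge>1 \<Longrightarrow> \<alpha>\<in>I k \<Longrightarrow> l \<ge> k \<Longrightarrow> \<beta> \<in> I l \<Longrightarrow> Q l \<beta> \<subseteq> Q k \<alpha> \<or> Q l \<beta> \<inter> Q k \<alpha> = {}"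
    using CF[rule_format, THEN conjunct2, THEN conjunct2, THEN conjunct2, THEN conjunct2, THEN conjunct2, THEN conjunct2, THEN conjunct2, THEN conjunct2, THEN conjunct1] by blast
  have Qh: "\<And>k \<alpha> x r. k\<ge>1 \<Longrightarrow> \<alpha>\<in>I k \<Longrightarrow> x \<in> Q k \<alpha> - E \<Longrightarrow> r > 0 \<Longrightarrow>
           (r \<le> \<delta> ^ k \<longrightarrow> emeasure \<mu> (?B x r \<inter> Q k \<alpha>) \<ge> ennreal c0 * emeasure \<mu> (?B x r)) \<and>
           (r > \<delta> ^ k \<longrightarrow> emeasure \<mu> (?B x r \<inter> Q k \<alpha>) \<ge> ennreal c0 * emeasure \<mu> (Q k \<alpha>))"
    using CF[rule_format, THEN conjunct2, THEN conjunct2, THEN conjunct2, THEN conjunct2, THEN conjunct2, THEN conjunct2, THEN conjunct2, THEN conjunct2, THEN conjunct2, THEN conjunct2, rule_format, THEN conjunct2] by blast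
  have Qsets: "\<And>k \<alpha>. k\<ge>1 \<Longrightarrow> \<alpha>\<in>I k \<Longrightarrow> Q k \<alpha> \<in> sets \<mu>" using Qopen opensets by blast
  have zQ: "\<And>k \<alpha>. k\<ge>1 \<Longrightarrow> \<alpha>\<in>I k \<Longrightarrow> z k \<alpha> \<in> Q k \<alpha>"
  proof -
    fix k :: nat and \<alpha> assume k: "k\<ge>1" and a: "\<alpha>\<in>I k"
    have "\<rho> (z k \<alpha>) (z k \<alpha>) = 0" using rho zO[OF k a] by blast
    moreover have "a0 * \<delta> ^ k > 0" using cst by simp
    ultimately have "z k \<alpha> \<in> ?B (z k \<alpha>) (a0 * \<delta> ^ k)" using zO[OF k a] unfolding qball_def by simp
    then show "z k \<alpha> \<in> Q k \<alpha>" using Qball[OF k a] by blast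
  qed
  have QsubB: "\<And>k \<alpha>. k\<ge>1 \<Longrightarrow> \<alpha>\<in>I k \<Longrightarrow> Q k \<alpha> \<subseteq> ?B (z k \<alpha>) (c1 * \<delta> ^ k)"
  proof
    fix k :: nat and \<alpha> w assume k: "k\<ge>1" and a: "\<alpha>\<in>I k" and w: "w \<in> Q k \<alpha>"
    obtain d where "d < c1 * \<delta> ^ k" "\<forall>x\<in>Q k \<alpha>. \<forall>y\<in>Q k \<alpha>. \<rho> x y \<le> d" using Qdiam[OF k a] by blast
    then have "\<rho> (z k \<alpha>) w < c1 * \<delta> ^ k" using zQ[OF k a] w by force
    moreover have "w \<in> \<Omega>" using w QOm[OF k a] OmO[of "Suc (Suc n)"] by auto
    ultimately show "w \<in> ?B (z k \<alpha>) (c1 * \<delta> ^ k)" unfolding qball_def by simp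
  qed
  have eqdisj: "\<And>k \<alpha> \<beta>. k\<ge>1 \<Longrightarrow> \<alpha>\<in>I k \<Longrightarrow> \<beta>\<in>I k \<Longrightarrow> Q k \<alpha> = Q k \<beta> \<or> Q k \<alpha> \<inter> Q k \<beta> = {}"
  proof -
    fix k :: nat and \<alpha> \<beta> assume k: "k\<ge>1" and a: "\<alpha>\<in>I k" and b: "\<beta>\<in>I k"
    from Qnest[OF k a order_refl b] Qnest[OF k b order_refl a]
    show "Q k \<alpha> = Q k \<beta> \<or> Q k \<alpha> \<inter> Q k \<beta> = {}" by blast
  qed
  have QsubO: "\<And>k \<alpha>. k\<ge>1 \<Longrightarrow> \<alpha>\<in>I k \<Longrightarrow> Q k \<alpha> \<subseteq> \<Omega>" using QOm OmO[of "Suc (Suc n)"] by fastforce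
  have zOm: "\<And>k \<alpha>. k\<ge>1 \<Longrightarrow> \<alpha>\<in>I k \<Longrightarrow> z k \<alpha> \<in> Om (Suc (Suc n))" using zQ QOm by blast
  have fin: "\<And>k. k\<ge>1 \<Longrightarrow> finite (Q k ` I k)"
  proof -
    fix k :: nat assume k: "k\<ge>1"
    define r0 where "r0 = a0 * \<delta> ^ k"
    have r0: "r0 > 0" unfolding r0_def using cst by simp
    define K0 where "K0 = ?T closure_of (Om (Suc (Suc n)))"
    have K0c: "compactin ?T K0" unfolding K0_def using cpt by simp
    have K0O: "K0 \<subseteq> \<Omega>" unfolding K0_def using closure_of_subset_topspace qtop_topspace by metis
    have OmK0: "Om (Suc (Suc n)) \<subseteq> K0" unfolding K0_def
      by (rule closure_of_subset) (use OmO[of "Suc (Suc n)"] in \<open>simp add: qtop_topspace\<close>)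
    have "K0 \<subseteq> \<Union>((\<lambda>p. ?B p r0) ` K0)"
    proof
      fix p assume "p \<in> K0"
      then have "p \<in> \<Omega>" using K0O by blast
      moreover have "\<rho> p p = 0" using rho \<open>p \<in> \<Omega>\<close> by blast
      ultimately have "p \<in> ?B p r0" using r0 unfolding qball_def by simp
      then show "p \<in> \<Union>((\<lambda>p. ?B p r0) ` K0)" using \<open>p \<in> K0\<close> by blast
    qed
    moreover have "\<forall>U\<in>(\<lambda>p. ?B p r0) ` K0. openin ?T U" using bopen K0O by blast
    ultimately obtain FF where FF: "finite FF" "FF \<subseteq> (\<lambda>p. ?B p r0) ` K0" "K0 \<subseteq> \<Union>FF"
      using K0c unfolding compactin_def by meson
    then obtain P where P: "P \<subseteq> K0" "finite P" "FF = (\<lambda>p. ?B p r0) ` P"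
      using finite_subset_image[OF FF(1,2)] by blast
    have hit: "\<And>S. S \<in> Q k ` I k \<Longrightarrow> \<exists>p. p \<in> P \<and> p \<in> S"
    proof -
      fix S assume "S \<in> Q k ` I k"
      then obtain \<alpha> where a: "\<alpha> \<in> I k" and S: "S = Q k \<alpha>" by blast
      have "z k \<alpha> \<in> K0" using zOm[OF k a] OmK0 by blast
      then obtain p where p: "p \<in> P" "z k \<alpha> \<in> ?B p r0" using FF(3) P(3) by blast
      have "p \<in> \<Omega>" using p(1) P(1) K0O by blast
      then have "p \<in> ?B (z k \<alpha>) r0" using p(2) rho zO[OF k a] unfolding qball_def by auto
      then have "p \<in> S" using Qball[OF k a] S unfolding r0_def by blast
      then show "\<exists>p. p \<in> P \<and> p \<in> S" using p(1) by blast
    qed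
    define f where "f S = (SOME p. p \<in> P \<and> p \<in> S)" for S
    have fS: "\<And>S. S \<in> Q k ` I k \<Longrightarrow> f S \<in> P \<and> f S \<in> S"
      unfolding f_def using hit by (metis (mono_tags, lifting) someI_ex)
    have "inj_on f (Q k ` I k)"
    proof (rule inj_onI)
      fix S S' assume S: "S \<in> Q k ` I k" and S': "S' \<in> Q k ` I k" and e: "f S = f S'"
      then have "S \<inter> S' \<noteq> {}" using fS by (metis disjoint_iff)
      then show "S = S'" using S S' eqdisj[OF k] by blast
    qed
    moreover have "f ` (Q k ` I k) \<subseteq> P" using fS by blast
    ultimately show "finite (Q k ` I k)" using inj_on_finite P(2) by blast
  qed
  have doub: "\<And>k B. k\<ge>1 \<Longrightarrow> \<delta> ^ k \<le> eps (Suc (Suc n)) \<Longrightarrow> a0 * \<delta> ^ k \<le> 2 * eps (Suc (Suc n)) \<Longrightarrow>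
      c1 * \<delta> ^ k \<le> eps (Suc (Suc n)) \<Longrightarrow> B \<subseteq> I k \<Longrightarrow> finite B \<Longrightarrow>
      (\<exists>c::real. AE x in \<mu>. x \<in> (\<Union>\<beta>\<in>B. Q k \<beta>) \<longrightarrow>
                       (\<forall>r>0. emeasure \<mu> (qball \<Omega> \<rho> x (2 * r) \<inter> (\<Union>\<beta>\<in>B. Q k \<beta>))
                               \<le> ennreal c * emeasure \<mu> (qball \<Omega> \<rho> x r \<inter> (\<Union>\<beta>\<in>B. Q k \<beta>))))"
  proof -
    fix k :: nat and B assume k: "k\<ge>1" and h1: "\<delta> ^ k \<le> eps (Suc (Suc n))"
      and h2: "a0 * \<delta> ^ k \<le> 2 * eps (Suc (Suc n))" and h3: "c1 * \<delta> ^ k \<le> eps (Suc (Suc n))"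
      and BI: "B \<subseteq> I k" and Bf: "finite B"
    define F where "F = (\<Union>\<beta>\<in>B. Q k \<beta>)"
    have Fsets: "F \<in> sets \<mu>" unfolding F_def using Bf BI Qsets[OF k] by blast
    have Qfin: "\<And>\<beta>. \<beta> \<in> I k \<Longrightarrow> emeasure \<mu> (Q k \<beta>) < \<infinity>"
    proof -
      fix \<beta> assume b: "\<beta> \<in> I k"
      have "emeasure \<mu> (Q k \<beta>) \<le> emeasure \<mu> (?B (z k \<beta>) (c1 * \<delta> ^ k))"
        by (rule emeasure_mono[OF QsubB[OF k b] bsets[OF zO[OF k b]]])
      also have "\<dots> < \<infinity>" using dbl[OF _ zOm[OF k b] _ h3] cst by simp
      finally show "emeasure \<mu> (Q k \<beta>) < \<infinity>" .
    qed
    have Qpos: "\<And>\<beta>. \<beta> \<in> I k \<Longrightarrow> emeasure \<mu> (Q k \<beta>) > 0"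
    proof -
      fix \<beta> assume b: "\<beta> \<in> I k"
      have "0 < emeasure \<mu> (?B (z k \<beta>) (2 * (a0 * \<delta> ^ k / 2)))"
        using dbl[OF _ zOm[OF k b], of "a0 * \<delta> ^ k / 2"] cst h2 by simp
      also have "\<dots> \<le> emeasure \<mu> (Q k \<beta>)"
        using emeasure_mono[OF Qball[OF k b] Qsets[OF k b]] by simp
      finally show "emeasure \<mu> (Q k \<beta>) > 0" .
    qed
    have Ffin: "emeasure \<mu> F < \<infinity>"
    proof -
      have "emeasure \<mu> F \<le> (\<Sum>\<beta>\<in>B. emeasure \<mu> (Q k \<beta>))"
        unfolding F_def by (rule emeasure_subadditive_finite[OF Bf]) (use BI Qsets[OF k] in blast)
      also have "\<dots> < \<infinity>" using Qfin BI ennreal_sum_less_top[OF Bf, of "\<lambda>\<beta>. emeasure \<mu> (Q k \<beta>)"]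
        by (simp add: subset_iff)
      finally show ?thesis .
    qed
    define MF where "MF = measure \<mu> F"
    have MF: "emeasure \<mu> F = ennreal MF" "MF \<ge> 0" unfolding MF_def
      using Ffin by (auto intro: emeasure_eq_ennreal_measure)
    define mQ where "mQ \<beta> = measure \<mu> (Q k \<beta>)" for \<beta>
    have mQ: "\<And>\<beta>. \<beta> \<in> I k \<Longrightarrow> emeasure \<mu> (Q k \<beta>) = ennreal (mQ \<beta>) \<and> mQ \<beta> > 0"
    proof -
      fix \<beta> assume b: "\<beta> \<in> I k"
      have e: "emeasure \<mu> (Q k \<beta>) = ennreal (mQ \<beta>)" unfolding mQ_def
        using Qfin[OF b] by (auto intro: emeasure_eq_ennreal_measure)
      then have "mQ \<beta> > 0" using Qpos[OF b] by (metis ennreal_eq_0_iff not_gr_zero not_le)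
      with e show "emeasure \<mu> (Q k \<beta>) = ennreal (mQ \<beta>) \<and> mQ \<beta> > 0" by blast
    qed
    define c where "c = Cd (Suc (Suc n)) / c0 + (\<Sum>\<beta>\<in>B. MF / (c0 * mQ \<beta>))"
    have tpos: "\<And>\<beta>. \<beta> \<in> B \<Longrightarrow> 0 \<le> MF / (c0 * mQ \<beta>)"
    proof -
      fix \<beta> assume "\<beta> \<in> B"
      then have "mQ \<beta> > 0" using mQ BI by blast
      then show "0 \<le> MF / (c0 * mQ \<beta>)" using MF(2) cst by simp
    qed
    have cge1: "Cd (Suc (Suc n)) / c0 \<le> c"
      unfolding c_def using tpos by (intro add_increasing2 sum_nonneg) auto
    have cge2: "\<And>\<beta>. \<beta> \<in> B \<Longrightarrow> MF / (c0 * mQ \<beta>) \<le> c"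
    proof -
      fix \<beta> assume b: "\<beta> \<in> B"
      have "MF / (c0 * mQ \<beta>) \<le> (\<Sum>\<beta>\<in>B. MF / (c0 * mQ \<beta>))"
        by (rule member_le_sum[OF b]) (use tpos BI Bf in auto)
      moreover have "Cd (Suc (Suc n)) / c0 \<ge> 0" using Cd1 cst by simp
      ultimately show "MF / (c0 * mQ \<beta>) \<le> c" unfolding c_def by linarith
    qed
    have "AE x in \<mu>. x \<in> F \<longrightarrow> (\<forall>r>0. emeasure \<mu> (?B x (2 * r) \<inter> F) \<le> ennreal c * emeasure \<mu> (?B x r \<inter> F))"
    proof (rule AE_I'[OF Enull], rule subsetI)
      fix x assume xin: "x \<in> {x\<in>space \<mu>. \<not> (x \<in> F \<longrightarrow> (\<forall>r>0. emeasure \<mu> (?B x (2 * r) \<inter> F) \<le> ennreal c * emeasure \<mu> (?B x r \<inter> F)))}"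
      then have xF: "x \<in> F" and notP: "\<not> (\<forall>r>0. emeasure \<mu> (?B x (2 * r) \<inter> F) \<le> ennreal c * emeasure \<mu> (?B x r \<inter> F))"
        by auto
      show "x \<in> E"
      proof (rule ccontr)
        assume xE: "x \<notin> E"
        obtain \<beta> where b: "\<beta> \<in> B" and xQ: "x \<in> Q k \<beta>" using xF unfolding F_def by blast
        have bI: "\<beta> \<in> I k" using b BI by blast
        have xO: "x \<in> \<Omega>" using xQ QsubO[OF k bI] by blast
        have xOm: "x \<in> Om (Suc (Suc n))" using xQ QOm[OF k bI] by blast
        have "\<forall>r>0. emeasure \<mu> (?B x (2 * r) \<inter> F) \<le> ennreal c * emeasure \<mu> (?B x r \<inter> F)"
        proof (intro allI impI)
          fix r :: real assume r: "r > 0"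
          have hh: "(r \<le> \<delta> ^ k \<longrightarrow> emeasure \<mu> (?B x r \<inter> Q k \<beta>) \<ge> ennreal c0 * emeasure \<mu> (?B x r)) \<and>
           (r > \<delta> ^ k \<longrightarrow> emeasure \<mu> (?B x r \<inter> Q k \<beta>) \<ge> ennreal c0 * emeasure \<mu> (Q k \<beta>))"
            using Qh[OF k bI _ r] xQ xE by blast
          have m1: "emeasure \<mu> (?B x r \<inter> Q k \<beta>) \<le> emeasure \<mu> (?B x r \<inter> F)"
            by (rule emeasure_mono) (use b Fsets bsets[OF xO] in \<open>auto simp: F_def\<close>)
          show "emeasure \<mu> (?B x (2 * r) \<inter> F) \<le> ennreal c * emeasure \<mu> (?B x r \<inter> F)"
          proof (cases "r \<le> \<delta> ^ k")
            case True
            have d: "emeasure \<mu> (?B x (2 * r)) \<le> ennreal (Cd (Suc (Suc n))) * emeasure \<mu> (?B x r)"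
              using dbl[OF _ xOm r] True h1 by simp
            have inv: "ennreal (1 / c0) * ennreal c0 = 1" using cst
              by (simp add: ennreal_mult[symmetric])
            have "emeasure \<mu> (?B x (2 * r) \<inter> F) \<le> emeasure \<mu> (?B x (2 * r))"
              by (rule emeasure_mono) (use bsets[OF xO] in auto)
            also have "\<dots> \<le> ennreal (Cd (Suc (Suc n))) * emeasure \<mu> (?B x r)" by (rule d)
            also have "\<dots> = ennreal (Cd (Suc (Suc n))) * ennreal (1 / c0) * (ennreal c0 * emeasure \<mu> (?B x r))"
              using inv by (metis mult.assoc mult_1)
            also have "\<dots> \<le> ennreal (Cd (Suc (Suc n))) * ennreal (1 / c0) * emeasure \<mu> (?B x r \<inter> F)"
              using hh True m1 by (intro mult_left_mono) auto
            also have "ennreal (Cd (Suc (Suc n))) * ennreal (1 / c0) = ennreal (Cd (Suc (Suc n)) / c0)"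
              using cst Cd1 by (simp add: ennreal_mult[symmetric])
            also have "ennreal (Cd (Suc (Suc n)) / c0) * emeasure \<mu> (?B x r \<inter> F) \<le> ennreal c * emeasure \<mu> (?B x r \<inter> F)"
              using cge1 by (intro mult_right_mono ennreal_leI) auto
            finally show ?thesis .
          next
            case False
            have mq: "emeasure \<mu> (Q k \<beta>) = ennreal (mQ \<beta>)" "mQ \<beta> > 0" using mQ[OF bI] by auto
            have "emeasure \<mu> (?B x (2 * r) \<inter> F) \<le> emeasure \<mu> F"
              by (rule emeasure_mono) (use Fsets in auto)
            also have "\<dots> = ennreal (MF / (c0 * mQ \<beta>)) * ennreal (c0 * mQ \<beta>)"
              using MF mq cst by (simp add: ennreal_mult[symmetric])
            also have "ennreal (c0 * mQ \<beta>) = ennreal c0 * emeasure \<mu> (Q k \<beta>)"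
              using mq cst by (simp add: ennreal_mult)
            also have "ennreal (MF / (c0 * mQ \<beta>)) * (ennreal c0 * emeasure \<mu> (Q k \<beta>)) \<le> ennreal (MF / (c0 * mQ \<beta>)) * emeasure \<mu> (?B x r \<inter> F)"
              using hh False m1 by (intro mult_left_mono) auto
            also have "\<dots> \<le> ennreal c * emeasure \<mu> (?B x r \<inter> F)"
              using cge2[OF b] by (intro mult_right_mono ennreal_leI) auto
            finally show ?thesis .
          qed
        qed
        with notP show False by blast
      qed
    qed
    then show "\<exists>c::real. AE x in \<mu>. x \<in> (\<Union>\<beta>\<in>B. Q k \<beta>) \<longrightarrow>
                       (\<forall>r>0. emeasure \<mu> (qball \<Omega> \<rho> x (2 * r) \<inter> (\<Union>\<beta>\<in>B. Q k \<beta>))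
                               \<le> ennreal c * emeasure \<mu> (qball \<Omega> \<rho> x r \<inter> (\<Union>\<beta>\<in>B. Q k \<beta>)))"
      unfolding F_def by blast
  qed
  define Bq2 where "Bq2 = Bq (Suc (Suc n))"
  have Bq2: "Bq2 \<ge> 1" unfolding Bq2_def using Bq1 by simp
  define c' where "c' = 2 * Bq2 * c1"
  have c'c1: "c1 \<le> c'" unfolding c'_def using Bq2 cst
    by (metis less_eq_real_def mult.commute mult_le_cancel_right1 one_add_one order.trans
        add_increasing2 mult_right_mono zero_le_one) 
  define Lc where "Lc = Bq2 * (c' + c1) + c' + a0 + c1 + 1"
  have Lc: "Lc > 0" unfolding Lc_def using Bq2 cst c'c1 by (smt (verit) mult_nonneg_nonneg)
  define e where "e = min (eps n) (min (eps (Suc n)) (eps (Suc (Suc n))))"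
  have e: "e > 0" "e \<le> eps n" "e \<le> eps (Suc n)" "e \<le> eps (Suc (Suc n))"
    unfolding e_def using epos assms(2) by auto
  obtain K where K: "\<delta> ^ K < e / Lc" using real_arch_pow_inv[of "e / Lc" \<delta>] e Lc cst by auto
  show ?thesis
  proof (intro exI[of _ c'] exI[of _ K] allI impI)
    fix k :: nat assume kK: "k \<ge> K" and k: "k \<ge> 1"
    define r where "r = \<delta> ^ k"
    have r0: "r > 0" unfolding r_def using cst by simp
    have "r \<le> \<delta> ^ K" unfolding r_def using kK cst by (intro power_decreasing) auto
    then have "Lc * r \<le> Lc * \<delta> ^ K" using Lc by (intro mult_left_mono) auto
    moreover have "Lc * \<delta> ^ K < e" using K Lc by (simp add: pos_less_divide_eq mult.commute)
    ultimately have "Lc * r < e" by linarith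
    then have key: "\<And>a. 0 \<le> a \<Longrightarrow> a \<le> Lc \<Longrightarrow> a * r < e"
      using r0 by (smt (verit) mult_right_mono)
    have i1: "Bq2 * (c' + c1) * r \<le> 2 * eps n"
      using key[of "Bq2 * (c' + c1)"] e Bq2 cst c'c1 unfolding Lc_def by (smt (verit) mult_nonneg_nonneg)
    have i0: "c1 * r \<le> 2 * eps n"
      using key[of c1] e Bq2 cst c'c1 unfolding Lc_def by (smt (verit) mult_nonneg_nonneg)
    have i2: "c' * r \<le> 2 * eps (Suc n)"
      using key[of c'] e Bq2 cst c'c1 unfolding Lc_def by (smt (verit) mult_nonneg_nonneg)
    have i3: "\<delta> ^ k \<le> eps (Suc (Suc n))"
      using key[of 1] e Bq2 cst c'c1 unfolding Lc_def r_def by (smt (verit) mult_nonneg_nonneg)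
    have i4: "a0 * \<delta> ^ k \<le> 2 * eps (Suc (Suc n))"
      using key[of a0] e Bq2 cst c'c1 unfolding Lc_def r_def by (smt (verit) mult_nonneg_nonneg)
    have i5: "c1 * \<delta> ^ k \<le> eps (Suc (Suc n))"
      using key[of c1] e Bq2 cst c'c1 unfolding Lc_def r_def by (smt (verit) mult_nonneg_nonneg)
    obtain A0 where A0: "A0 \<subseteq> I k" "finite A0" "Q k ` I k = Q k ` A0"
      using finite_subset_image[OF fin[OF k] order_refl] by blast
    have rep: "\<And>\<gamma>. \<gamma> \<in> I k \<Longrightarrow> \<exists>\<beta>\<in>A0. Q k \<gamma> = Q k \<beta>" using A0(3) by blast
    define A where "A = {\<alpha>\<in>A0. Q k \<alpha> \<inter> Om n \<noteq> {}}"
    have AI: "A \<subseteq> I k" "finite A" unfolding A_def using A0 by auto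
    show "\<exists>A\<subseteq>I k. finite A \<and>
              Om n - (\<Union>\<alpha>\<in>A. Q k \<alpha>) \<in> null_sets \<mu> \<and>
              (\<forall>\<alpha>\<in>A.
                 Q k \<alpha> \<subseteq> qball \<Omega> \<rho> (z k \<alpha>) (c1 * \<delta> ^ k) \<and>
                 qball \<Omega> \<rho> (z k \<alpha>) (c1 * \<delta> ^ k) \<subseteq> Om (Suc n) \<and>
                 (\<exists>B\<subseteq>I k. finite B \<and>
                    qball \<Omega> \<rho> (z k \<alpha>) (c1 * \<delta> ^ k) - (\<Union>\<beta>\<in>B. Q k \<beta>) \<in> null_sets \<mu> \<and>
                    (\<Union>\<beta>\<in>B. Q k \<beta>) \<subseteq> qball \<Omega> \<rho> (z k \<alpha>) (c' * \<delta> ^ k) \<and>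
                    qball \<Omega> \<rho> (z k \<alpha>) (c' * \<delta> ^ k) \<subseteq> Om (Suc n) \<and>
                    (\<exists>c::real. AE x in \<mu>. x \<in> (\<Union>\<beta>\<in>B. Q k \<beta>) \<longrightarrow>
                       (\<forall>r>0. emeasure \<mu> (qball \<Omega> \<rho> x (2 * r) \<inter> (\<Union>\<beta>\<in>B. Q k \<beta>))
                               \<le> ennreal c * emeasure \<mu> (qball \<Omega> \<rho> x r \<inter> (\<Union>\<beta>\<in>B. Q k \<beta>))))))"
    proof (rule exI[of _ A], intro conjI ballI)
      show "A \<subseteq> I k" "finite A" using AI by auto
      have "Om n - (\<Union>\<alpha>\<in>A. Q k \<alpha>) \<subseteq> E"
      proof
        fix x assume x: "x \<in> Om n - (\<Union>\<alpha>\<in>A. Q k \<alpha>)"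
        show "x \<in> E"
        proof (rule ccontr)
          assume "x \<notin> E"
          moreover have "x \<in> Om (Suc n)" using x mono[of n "Suc n"] assms(2) by auto
          ultimately obtain \<gamma> where g: "\<gamma> \<in> I k" "x \<in> Q k \<gamma>" using cover[OF k] by blast
          then obtain \<beta> where "\<beta> \<in> A0" "Q k \<gamma> = Q k \<beta>" using rep by blast
          then have "\<beta> \<in> A" "x \<in> Q k \<beta>" using g x unfolding A_def by auto
          then show False using x by blast
        qed
      qed
      moreover have "Om n - (\<Union>\<alpha>\<in>A. Q k \<alpha>) \<in> sets \<mu>"
        using Omsets[OF assms(2)] AI Qsets[OF k] by blast
      ultimately show "Om n - (\<Union>\<alpha>\<in>A. Q k \<alpha>) \<in> null_sets \<mu>" using null_sets_subset Enull by blast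
    next
      fix \<alpha> assume aA: "\<alpha> \<in> A"
      then have a: "\<alpha> \<in> I k" using AI by blast
      obtain x0 where x0: "x0 \<in> Q k \<alpha>" "x0 \<in> Om n" using aA unfolding A_def by blast
      define z0 where "z0 = z k \<alpha>"
      have z0O: "z0 \<in> \<Omega>" unfolding z0_def using zO[OF k a] .
      have x0O: "x0 \<in> \<Omega>" using x0 QsubO[OF k a] by blast
      have "\<rho> z0 x0 < c1 * r" using QsubB[OF k a] x0 unfolding z0_def r_def qball_def by blast
      then have dz: "\<rho> x0 z0 < c1 * r" "\<rho> z0 x0 < c1 * r" using rho z0O x0O by auto
      have z0Om: "z0 \<in> Om (Suc n)"
        using nb[OF assms(2) x0(2) i0] dz z0O unfolding qball_def by blast
      have Om12: "Om (Suc n) \<subseteq> Om (Suc (Suc n))" "Om n \<subseteq> Om (Suc (Suc n))"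
        using mono assms(2) by auto
      have big: "?B z0 (c' * r) \<subseteq> Om (Suc n)"
      proof
        fix y assume y: "y \<in> ?B z0 (c' * r)"
        have yO: "y \<in> \<Omega>" and yz: "\<rho> z0 y < c' * r" using y unfolding qball_def by auto
        have yOm: "y \<in> Om (Suc (Suc n))" using nb[OF _ z0Om i2] y by auto
        have "\<rho> y x0 \<le> Bq2 * (\<rho> y z0 + \<rho> z0 x0)" unfolding Bq2_def
          using qt[of "Suc (Suc n)" y x0 z0] yOm Om12 x0 z0Om by auto
        also have "\<dots> < Bq2 * ((c' + c1) * r)"
          using yz dz rho yO z0O Bq2 by (intro mult_strict_left_mono) (auto simp: algebra_simps)
        also have "\<dots> \<le> 2 * eps n" using i1 by (simp add: mult.assoc)
        finally show "y \<in> Om (Suc n)" using nb0[OF assms(2)] yO x0(2) by blast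
      qed
      have small: "?B z0 (c1 * r) \<subseteq> ?B z0 (c' * r)" using c'c1 r0 by (intro qball_mono mult_right_mono) auto
      show "Q k \<alpha> \<subseteq> qball \<Omega> \<rho> (z k \<alpha>) (c1 * \<delta> ^ k)" using QsubB[OF k a] .
      show sb: "qball \<Omega> \<rho> (z k \<alpha>) (c1 * \<delta> ^ k) \<subseteq> Om (Suc n)"
        using big small unfolding z0_def r_def by blast
      define B where "B = {\<beta>\<in>A0. Q k \<beta> \<inter> ?B z0 (c1 * r) \<noteq> {}}"
      have BI: "B \<subseteq> I k" "finite B" unfolding B_def using A0 by auto
      show "\<exists>B\<subseteq>I k. finite B \<and>
                    qball \<Omega> \<rho> (z k \<alpha>) (c1 * \<delta> ^ k) - (\<Union>\<beta>\<in>B. Q k \<beta>) \<in> null_sets \<mu> \<and>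
                    (\<Union>\<beta>\<in>B. Q k \<beta>) \<subseteq> qball \<Omega> \<rho> (z k \<alpha>) (c' * \<delta> ^ k) \<and>
                    qball \<Omega> \<rho> (z k \<alpha>) (c' * \<delta> ^ k) \<subseteq> Om (Suc n) \<and>
                    (\<exists>c::real. AE x in \<mu>. x \<in> (\<Union>\<beta>\<in>B. Q k \<beta>) \<longrightarrow>
                       (\<forall>r>0. emeasure \<mu> (qball \<Omega> \<rho> x (2 * r) \<inter> (\<Union>\<beta>\<in>B. Q k \<beta>))
                               \<le> ennreal c * emeasure \<mu> (qball \<Omega> \<rho> x r \<inter> (\<Union>\<beta>\<in>B. Q k \<beta>))))"
      proof -
        have "?B z0 (c1 * r) - (\<Union>\<beta>\<in>B. Q k \<beta>) \<subseteq> E"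
        proof
          fix x assume x: "x \<in> ?B z0 (c1 * r) - (\<Union>\<beta>\<in>B. Q k \<beta>)"
          show "x \<in> E"
          proof (rule ccontr)
            assume "x \<notin> E"
            moreover have "x \<in> Om (Suc n)" using x sb unfolding z0_def r_def by blast
            ultimately obtain \<gamma> where g: "\<gamma> \<in> I k" "x \<in> Q k \<gamma>" using cover[OF k] by blast
            then obtain \<beta> where "\<beta> \<in> A0" "Q k \<gamma> = Q k \<beta>" using rep by blast
            then have "\<beta> \<in> B" "x \<in> Q k \<beta>" using g x unfolding B_def by auto
            then show False using x by blast
          qed
        qed
        moreover have "?B z0 (c1 * r) - (\<Union>\<beta>\<in>B. Q k \<beta>) \<in> sets \<mu>"
          using bsets[OF z0O] BI Qsets[OF k] by blast
        ultimately have b3: "qball \<Omega> \<rho> (z k \<alpha>) (c1 * \<delta> ^ k) - (\<Union>\<beta>\<in>B. Q k \<beta>) \<in> null_sets \<mu>"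
          using null_sets_subset Enull unfolding z0_def r_def by blast
        have b4: "(\<Union>\<beta>\<in>B. Q k \<beta>) \<subseteq> qball \<Omega> \<rho> (z k \<alpha>) (c' * \<delta> ^ k)"
        proof
          fix w assume "w \<in> (\<Union>\<beta>\<in>B. Q k \<beta>)"
          then obtain \<beta> y where b: "\<beta> \<in> B" and w: "w \<in> Q k \<beta>" and y: "y \<in> Q k \<beta>" "y \<in> ?B z0 (c1 * r)"
            unfolding B_def by blast
          have bI: "\<beta> \<in> I k" using b BI by blast
          obtain d where d: "d < c1 * \<delta> ^ k" "\<forall>x\<in>Q k \<beta>. \<forall>y\<in>Q k \<beta>. \<rho> x y \<le> d" using Qdiam[OF k bI] by blast
          have yw: "\<rho> y w < c1 * r" using d y w unfolding r_def by force
          have zy: "\<rho> z0 y < c1 * r" using y unfolding qball_def by auto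
          have yOm: "y \<in> Om (Suc (Suc n))" using y(2) small big Om12 by blast
          have wOm: "w \<in> Om (Suc (Suc n))" using w QOm[OF k bI] by blast
          have "\<rho> z0 w \<le> Bq2 * (\<rho> z0 y + \<rho> y w)" unfolding Bq2_def
            using qt[of "Suc (Suc n)" z0 w y] yOm wOm Om12 z0Om by auto
          also have "\<dots> < Bq2 * (2 * c1 * r)"
            using yw zy Bq2 by (intro mult_strict_left_mono) auto
          also have "\<dots> = c' * r" unfolding c'_def by simp
          finally have "\<rho> z0 w < c' * r" .
          moreover have "w \<in> \<Omega>" using w QsubO[OF k bI] by blast
          ultimately show "w \<in> qball \<Omega> \<rho> (z k \<alpha>) (c' * \<delta> ^ k)"
            unfolding qball_def z0_def r_def by simp
        qed
        have b5: "qball \<Omega> \<rho> (z k \<alpha>) (c' * \<delta> ^ k) \<subseteq> Om (Suc n)" using big unfolding z0_def r_def .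
        have b6: "\<exists>c::real. AE x in \<mu>. x \<in> (\<Union>\<beta>\<in>B. Q k \<beta>) \<longrightarrow>
                       (\<forall>r>0. emeasure \<mu> (qball \<Omega> \<rho> x (2 * r) \<inter> (\<Union>\<beta>\<in>B. Q k \<beta>))
                               \<le> ennreal c * emeasure \<mu> (qball \<Omega> \<rho> x r \<inter> (\<Union>\<beta>\<in>B. Q k \<beta>)))"
          using doub[OF k i3 i4 i5 BI] .
        show ?thesis
          apply (intro exI[of _ B] conjI)
          apply (rule BI(1))
          apply (rule BI(2))
          apply (rule b3)
          apply (rule b4)
          apply (rule b5)
          apply (rule b6)
          done
      qed
    qed
  qed
qed

end
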